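(* The algorithm Balance is not competitive for the infinite server problem on the real line.
   Context: Infinite server problem on the real line: an unbounded number of servers initially reside at a source point; a finite sequence of requests is revealed one by one; each must be served immediately, without knowledge of future requests, by moving a server to it; the cost is the total distance traveled. Balance serves a request $r$ by moving to $r$ a server $x$ minimizing $D_x+d(x,r)$, where $D_x$ is the cumulative distance traveled by $x$ so far and $d(x,r)$ is its distance to $r$ (servers still at the source have $D_x=0$). An online algorithm is competitive if there are $\rho,c$ with $ALG(\sigma)\le\rho\,OPT(\sigma)+c$ for all request sequences $\sigma$. *)

theory Defs
  imports Main Complex_Main
begin

text \<open>Servers that have moved at least once are recorded in a configuration list
  of pairs (position, cumulative distance travelled D_x).  All other servers
  (unboundedly many) are still at the source with D_x = 0.
  A choice None means: use a fresh server from the source;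
  Some i (i < length C) means: use the i-th moved server.\<close>

type_synonym conf = "(real \<times> real) list"

type_synonym policy = "real list \<Rightarrow> conf \<Rightarrow> real \<Rightarrow> nat option"

definition step :: "real \<Rightarrow> real \<Rightarrow> conf \<Rightarrow> nat option \<Rightarrow> conf \<times> real" where
  "step s r C ch =
     (case ch of
        Some i \<Rightarrow> (if i < length C
                   then (C[i := (r, snd (C!i) + \<bar>fst (C!i) - r\<bar>)], \<bar>fst (C!i) - r\<bar>)
                   else (C @ [(r, \<bar>r - s\<bar>)], \<bar>r - s\<bar>))
      | None \<Rightarrow> (C @ [(r, \<bar>r - s\<bar>)], \<bar>r - s\<bar>))"

text \<open>Total cost of serving the remaining requests with a (history dependent) policy;
  h is the list of requests revealed so far.\<close>
fun exec :: "real \<Rightarrow> policy \<Rightarrow> real list \<Rightarrow> conf \<Rightarrow> real list \<Rightarrow> real" where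
  "exec s pol h C [] = 0"
| "exec s pol h C (r # rs) =
     (let (C', c) = step s r C (pol h C r) in c + exec s pol (h @ [r]) C' rs)"

definition alg_cost :: "real \<Rightarrow> policy \<Rightarrow> real list \<Rightarrow> real" where
  "alg_cost s pol \<sigma> = exec s pol [] [] \<sigma>"

text \<open>Offline optimum: the best cost over all ways of serving sigma
  (a policy may depend on everything, sigma being fixed).\<close>
definition OPT :: "real \<Rightarrow> real list \<Rightarrow> real" where
  "OPT s \<sigma> = Inf (range (\<lambda>pol. alg_cost s pol \<sigma>))"

definition bal_val :: "real \<Rightarrow> conf \<Rightarrow> real \<Rightarrow> nat option \<Rightarrow> real" where
  "bal_val s C r ch =
     (case ch of Some i \<Rightarrow> snd (C!i) + \<bar>fst (C!i) - r\<bar> | None \<Rightarrow> \<bar>r - s\<bar>)"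

definition balance_choice :: "real \<Rightarrow> conf \<Rightarrow> real \<Rightarrow> nat option \<Rightarrow> bool" where
  "balance_choice s C r ch \<longleftrightarrow>
     (\<forall>i. ch = Some i \<longrightarrow> i < length C) \<and>
     bal_val s C r ch \<le> \<bar>r - s\<bar> \<and>
     (\<forall>j < length C. bal_val s C r ch \<le> bal_val s C r (Some j))"

text \<open>A (deterministic) implementation of Balance: any tie-breaking rule.\<close>
definition is_balance :: "real \<Rightarrow> policy \<Rightarrow> bool" where
  "is_balance s pol \<longleftrightarrow> (\<forall>h C r. balance_choice s C r (pol h C r))"

definition competitive :: "real \<Rightarrow> policy \<Rightarrow> bool" where
  "competitive s pol \<longleftrightarrow>
     (\<exists>\<rho> c. \<forall>\<sigma>. alg_cost s pol \<sigma> \<le> \<rho> * OPT s \<sigma> + c)"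

end

theory Submission
  imports Defs
begin

lemma exec_nonneg: "exec s pol h C rs \<ge> 0"
proof (induction rs arbitrary: h C)
  case Nil then show ?case by simp
next
  case (Cons r rs)
  obtain C' c where st: "step s r C (pol h C r) = (C', c)" by (cases "step s r C (pol h C r)")
  have "c \<ge> 0" using st by (auto simp: step_def split: option.splits if_splits)
  then show ?case using st Cons[of "h @ [r]" C'] by simp
qed

lemma exec_bal_lower:
  assumes bal: "is_balance s pol"
    and "sorted_wrt (>) rs"
    and "\<forall>r\<in>set rs. r > s + 1"
    and "\<forall>p\<in>set C. (\<forall>r\<in>set rs. fst p > r) \<and> snd p \<ge> fst p - s"
  shows "exec s pol h C rs \<ge> real (length rs)"
  using assms(2-)
proof (induction rs arbitrary: h C)
  case Nil then show ?case by simp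
next
  case (Cons r rs)
  have bc: "balance_choice s C r (pol h C r)" using bal unfolding is_balance_def by blast
  have none: "pol h C r = None"
  proof (rule ccontr)
    assume "pol h C r \<noteq> None"
    then obtain i where i: "pol h C r = Some i" by auto
    with bc have il: "i < length C" and le: "snd (C!i) + \<bar>fst (C!i) - r\<bar> \<le> \<bar>r - s\<bar>"
      unfolding balance_choice_def bal_val_def by auto
    have "C!i \<in> set C" using il by simp
    with Cons.prems(3) have "fst (C!i) > r" "snd (C!i) \<ge> fst (C!i) - s" by auto
    moreover have "r > s" using Cons.prems(2) by auto
    ultimately show False using le by auto
  qed
  have rs1: "r > s + 1" using Cons.prems(2) by auto
  have st: "step s r C (pol h C r) = (C @ [(r, r - s)], r - s)"
    using none rs1 by (simp add: step_def)
  have IH: "exec s pol (h @ [r]) (C @ [(r, r - s)]) rs \<ge> real (length rs)"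
    apply (rule Cons.IH)
    using Cons.prems by auto
  show ?case using st IH rs1 by simp
qed

definition pol0 :: policy where "pol0 = (\<lambda>h C r. if C = [] then None else Some 0)"

lemma exec_pol0_upper:
  assumes "sorted_wrt (>) rs" "\<forall>r\<in>set rs. a \<le> r \<and> r \<le> x" "a \<le> x"
  shows "exec s pol0 h [(x, D)] rs \<le> x - a"
  using assms
proof (induction rs arbitrary: h x D)
  case Nil then show ?case by simp
next
  case (Cons r rs)
  have st: "step s r [(x, D)] (pol0 h [(x, D)] r) = ([(r, D + \<bar>x - r\<bar>)], \<bar>x - r\<bar>)"
    by (simp add: step_def pol0_def)
  have IH: "exec s pol0 (h @ [r]) [(r, D + \<bar>x - r\<bar>)] rs \<le> r - a"
    apply (rule Cons.IH) using Cons.prems by auto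
  show ?case using st IH Cons.prems(2) by simp
qed

lemma OPT_bounds:
  assumes "sorted_wrt (>) rs" "\<forall>r\<in>set rs. s + 1 \<le> r \<and> r \<le> s + 2"
  shows "0 \<le> OPT s rs \<and> OPT s rs \<le> 3"
proof -
  have bdd: "bdd_below (range (\<lambda>pol. alg_cost s pol rs))"
    by (rule bdd_belowI[of _ 0]) (auto simp: alg_cost_def exec_nonneg)
  have "0 \<le> OPT s rs" unfolding OPT_def
    by (rule cInf_greatest) (auto simp: alg_cost_def exec_nonneg)
  moreover have "alg_cost s pol0 rs \<le> 3"
  proof (cases rs)
    case Nil then show ?thesis by (simp add: alg_cost_def)
  next
    case (Cons r rs')
    have st: "step s r [] (pol0 [] [] r) = ([(r, \<bar>r - s\<bar>)], \<bar>r - s\<bar>)"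
      by (simp add: step_def pol0_def)
    have "exec s pol0 [r] [(r, \<bar>r - s\<bar>)] rs' \<le> r - (s + 1)"
      apply (rule exec_pol0_upper) using assms Cons by auto
    then show ?thesis using st assms Cons by (simp add: alg_cost_def)
  qed
  moreover have "OPT s rs \<le> alg_cost s pol0 rs" unfolding OPT_def
    by (rule cInf_lower[OF _ bdd]) simp
  ultimately show ?thesis by linarith
qed

definition seqn :: "real \<Rightarrow> nat \<Rightarrow> real list" where
  "seqn s n = map (\<lambda>k. s + 1 + 1 / (real k + 1)) [0..<n]"

lemma seqn_sorted: "sorted_wrt (>) (seqn s n)"
  unfolding seqn_def sorted_wrt_map
  by (rule sorted_wrt_mono_rel[OF _ sorted_wrt_upt]) (auto simp: frac_less2)

lemma seqn_range: "\<forall>r\<in>set (seqn s n). s + 1 < r \<and> r \<le> s + 2"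
  unfolding seqn_def by auto

theorem proposition4:
  fixes s :: real and pol :: policy
  assumes "is_balance s pol"
  shows "\<not> competitive s pol"
proof
  assume "competitive s pol"
  then obtain \<rho> c where H: "\<And>\<sigma>. alg_cost s pol \<sigma> \<le> \<rho> * OPT s \<sigma> + c"
    unfolding competitive_def by blast
  define n where "n = nat \<lceil>3 * \<bar>\<rho>\<bar> + \<bar>c\<bar>\<rceil> + 1"
  have nb: "real n > 3 * \<bar>\<rho>\<bar> + \<bar>c\<bar>" unfolding n_def by linarith
  have A: "alg_cost s pol (seqn s n) \<ge> real n"
    using exec_bal_lower[OF assms seqn_sorted, where h="[]" and C="[]"] seqn_range[of s n]
    by (auto simp: alg_cost_def seqn_def)
  have O: "0 \<le> OPT s (seqn s n) \<and> OPT s (seqn s n) \<le> 3"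
    using OPT_bounds[OF seqn_sorted] seqn_range[of s n] by force
  have "\<rho> * OPT s (seqn s n) \<le> 3 * \<bar>\<rho>\<bar>"
  proof -
    have "\<rho> * OPT s (seqn s n) \<le> \<bar>\<rho>\<bar> * OPT s (seqn s n)"
      using O by (simp add: mult_right_mono)
    also have "\<dots> \<le> \<bar>\<rho>\<bar> * 3" using O by (simp add: mult_left_mono)
    finally show ?thesis by simp
  qed
  with H[of "seqn s n"] A nb show False by linarith
qed

end
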